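(* For every $i$ with $0\le i\le \rho(m)-1$, the sequence $x^{\alpha_i}$ satisfies $x^{\alpha_i}(k)=1$.
   Context: For $u\in\mathbb{R}$ let $\mathbf 1[u]=1$ if $u\ge 0$ and $\mathbf 1[u]=0$ if $u<0$. Let $m$ be a positive integer and let $\rho(m)$ denote the number of primes $p$ with $2m<p<3m$; assume $\rho(m)\ge 2$. List these primes as $p_0>p_1>\dots>p_{\rho(m)-1}$ and put $\alpha_i=3m-p_i$. Let $k=(6m-1)\rho(m)$, $\mu_i=\lfloor k/p_i\rfloor$, $\beta_i=k-p_i\mu_i$. Define weights $\bar a_j$, $1\le j\le k$: if $\rho(m)$ is even, $\bar a_j=2$ if $j=\ell p_i$ for some $i$ and some $\ell$ with $1\le \ell\le 3\rho(m)/2$, $\bar a_j=-2$ if $j=\ell p_i$ with $3\rho(m)/2<\ell\le 2\rho(m)$, and $\bar a_j=0$ otherwise; if $\rho(m)$ is odd, $\bar a_j=2$ if $j=\ell p_i$ with $1\le\ell\le (3\rho(m)-1)/2$, $\bar a_j=-2$ if $j=\ell p_i$ with $(3\rho(m)+1)/2\le \ell\le 2\rho(m)-2$, $\bar a_j=-1$ if $j=\ell p_i$ with $\ell\in\{2\rho(m)-1,2\rho(m)\}$, and $\bar a_j=0$ otherwise (well defined since the sets $\{\ell p_i:1\le\ell\le2\rho(m)\}$ are pairwise disjoint). Let $\bar\theta=2\rho(m)$. For each $i$ define $x^{\alpha_i}(t)$ for $0\le t\le k-1$ by $x^{\alpha_i}(t)=1$ if $t=\beta_i+\ell p_i$ for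 some $0\le \ell\le\mu_i-1$ and $x^{\alpha_i}(t)=0$ otherwise, and for $t\ge k$ by $x^{\alpha_i}(t)=\mathbf 1\big[\sum_{j=1}^k \bar a_j x^{\alpha_i}(t-j)-\bar\theta\big]$. *)

theory Defs
  imports "HOL-Computational_Algebra.Primes"
begin

definition prime_set :: "nat \<Rightarrow> nat set" where
  "prime_set m = {p. prime p \<and> 2*m < p \<and> p < 3*m}"

definition rho :: "nat \<Rightarrow> nat" where
  "rho m = card (prime_set m)"

definition pr :: "nat \<Rightarrow> nat \<Rightarrow> nat" where
  "pr m i = rev (sorted_list_of_set (prime_set m)) ! i"

definition alpha :: "nat \<Rightarrow> nat \<Rightarrow> nat" where
  "alpha m i = 3*m - pr m i"

definition kk :: "nat \<Rightarrow> nat" where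
  "kk m = (6*m - 1) * rho m"

definition mu :: "nat \<Rightarrow> nat \<Rightarrow> nat" where
  "mu m i = kk m div pr m i"

definition beta :: "nat \<Rightarrow> nat \<Rightarrow> nat" where
  "beta m i = kk m - pr m i * mu m i"

text \<open>Weights \<open>a_j\<close>; the sets of multiples are pairwise disjoint, so the case
  distinction below agrees with the paper's definition.\<close>
definition abar :: "nat \<Rightarrow> nat \<Rightarrow> int" where
  "abar m j =
    (let r = rho m;
         M = (\<lambda>P. \<exists>i<r. \<exists>l. P l \<and> j = l * pr m i) in
     if even r then
       (if M (\<lambda>l. 1 \<le> l \<and> 2*l \<le> 3*r) then 2
        else if M (\<lambda>l. 3*r < 2*l \<and> l \<le> 2*r) then -2
        else 0)
     else
       (if M (\<lambda>l. 1 \<le> l \<and> 2*l \<le> 3*r - 1) then 2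
        else if M (\<lambda>l. 3*r + 1 \<le> 2*l \<and> l \<le> 2*r - 2) then -2
        else if M (\<lambda>l. l = 2*r - 1 \<or> l = 2*r) then -1
        else 0))"

definition theta :: "nat \<Rightarrow> int" where
  "theta m = 2 * int (rho m)"

definition step :: "int \<Rightarrow> int" where
  "step u = (if u \<ge> 0 then 1 else 0)"

function xs :: "nat \<Rightarrow> nat \<Rightarrow> nat \<Rightarrow> int" where
  "xs m i t =
    (if t < kk m then (if \<exists>l<mu m i. t = beta m i + l * pr m i then 1 else 0)
     else step ((\<Sum>j\<in>{1..kk m}. abar m j * xs m i (t - j)) - theta m))"
  by auto
termination
  by (relation "measure (\<lambda>(m,i,t). t)") auto

end

theory Submission
  imports Defs
begin

declare xs.simps[simp del]

lemma finite_ps: "finite (prime_set m)"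
  by (rule finite_subset[of _ "{..<3*m}"]) (auto simp: prime_set_def)

lemma pr_in: "i < rho m \<Longrightarrow> pr m i \<in> prime_set m"
  unfolding pr_def rho_def
  by (metis finite_ps length_rev length_sorted_list_of_set nth_mem set_rev
      sorted_list_of_set.set_sorted_key_list_of_set)

lemma rho_le: "rho m \<le> m - 1"
proof -
  have "prime_set m \<subseteq> {2*m+1..<3*m}" by (auto simp: prime_set_def)
  then have "rho m \<le> card {2*m+1..<3*m}" unfolding rho_def by (intro card_mono) auto
  then show ?thesis by simp
qed

lemma key:
  assumes "i < rho m" "i' < rho m" "0 < q" "l \<le> 2 * rho m" "q * pr m i = l * pr m i'"
  shows "l = q"
proof (cases "pr m i = pr m i'")
  case True
  have "pr m i > 0" using pr_in[OF assms(1)] by (auto simp: prime_set_def prime_gt_0_nat)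
  then show ?thesis using assms(5) True by simp
next
  case False
  have p1: "prime (pr m i)" "2*m < pr m i" using pr_in[OF assms(1)] by (auto simp: prime_set_def)
  have p2: "prime (pr m i')" using pr_in[OF assms(2)] by (auto simp: prime_set_def)
  have "pr m i dvd l * pr m i'" using assms(5) by (metis dvd_triv_right)
  moreover have "\<not> pr m i dvd pr m i'" using False p1 p2 by (metis primes_dvd_imp_eq)
  ultimately have d: "pr m i dvd l" using p1 by (metis prime_dvd_multD)
  have "l > 0" using assms(3,5) p1 by (metis gr0I mult_0 mult_is_0 not_prime_0)
  then have "l \<ge> pr m i" using d by (simp add: dvd_imp_le)
  moreover have "rho m \<le> m - 1" by (rule rho_le)
  ultimately show ?thesis using assms(4) p1 by linarith
qed

definition fa :: "nat \<Rightarrow> nat \<Rightarrow> int" where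
  "fa r l = (if even r then
       (if 1 \<le> l \<and> 2*l \<le> 3*r then 2
        else if 3*r < 2*l \<and> l \<le> 2*r then -2
        else 0)
     else
       (if 1 \<le> l \<and> 2*l \<le> 3*r - 1 then 2
        else if 3*r + 1 \<le> 2*l \<and> l \<le> 2*r - 2 then -2
        else if l = 2*r - 1 \<or> l = 2*r then -1
        else 0))"

lemma Mlem:
  assumes "i < rho m" "0 < q" "\<And>l. P l \<Longrightarrow> l \<le> 2 * rho m"
  shows "(\<exists>i'<rho m. \<exists>l. P l \<and> q * pr m i = l * pr m i') \<longleftrightarrow> P q"
  using key[OF assms(1) _ assms(2)] assms by blast

lemma abar_mult:
  assumes "i < rho m" "0 < q"
  shows "abar m (q * pr m i) = fa (rho m) q"
proof -
  note M = Mlem[OF assms]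
  have e1: "(\<exists>i'<rho m. \<exists>l. (1 \<le> l \<and> 2*l \<le> 3*rho m) \<and> q * pr m i = l * pr m i') \<longleftrightarrow> (1 \<le> q \<and> 2*q \<le> 3*rho m)"
    if "even (rho m)" using that by (intro M) (auto elim!: evenE)
  have e2: "(\<exists>i'<rho m. \<exists>l. (3*rho m < 2*l \<and> l \<le> 2*rho m) \<and> q * pr m i = l * pr m i') \<longleftrightarrow> (3*rho m < 2*q \<and> q \<le> 2*rho m)"
    by (intro M) auto
  have e3: "(\<exists>i'<rho m. \<exists>l. (1 \<le> l \<and> 2*l \<le> 3*rho m - 1) \<and> q * pr m i = l * pr m i') \<longleftrightarrow> (1 \<le> q \<and> 2*q \<le> 3*rho m - 1)"
    by (intro M) auto
  have e4: "(\<exists>i'<rho m. \<exists>l. (3*rho m + 1 \<le> 2*l \<and> l \<le> 2*rho m - 2) \<and> q * pr m i = l * pr m i') \<longleftrightarrow> (3*rho m + 1 \<le> 2*q \<and> q \<le> 2*rho m - 2)"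
    by (intro M) auto
  have e5: "(\<exists>i'<rho m. \<exists>l. (l = 2*rho m - 1 \<or> l = 2*rho m) \<and> q * pr m i = l * pr m i') \<longleftrightarrow> (q = 2*rho m - 1 \<or> q = 2*rho m)"
    by (intro M) auto
  show ?thesis
  proof (cases "even (rho m)")
    case True
    then show ?thesis by (simp only: abar_def Let_def fa_def e1[OF True] e2 True if_True)
  next
    case False
    then show ?thesis by (simp only: abar_def Let_def fa_def e3 e4 e5 False if_False)
  qed
qed

lemma fa_zero: "2 * r < q \<Longrightarrow> fa r q = 0"
  unfolding fa_def by auto

lemma fa_sum: assumes "r \<ge> 2" shows "(\<Sum>q\<in>{1..2*r}. fa r q) = 2 * int r"
proof (cases "even r")
  case True
  then obtain s where s: "r = 2*s" by auto
  have "(\<Sum>q\<in>{1..2*r}. fa r q) = (\<Sum>q\<in>{1..3*s+s}. fa r q)" using s by (simp add: algebra_simps)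
  also have "\<dots> = (\<Sum>q\<in>{1..3*s}. fa r q) + (\<Sum>q\<in>{3*s+1..3*s+s}. fa r q)"
    by (rule sum.ub_add_nat) simp
  also have "(\<Sum>q\<in>{1..3*s}. fa r q) = (\<Sum>q\<in>{1..3*s}. 2)"
    by (rule sum.cong) (auto simp: fa_def s)
  also have "(\<Sum>q\<in>{3*s+1..3*s+s}. fa r q) = (\<Sum>q\<in>{3*s+1..3*s+s}. -2)"
    by (rule sum.cong) (auto simp: fa_def s)
  finally show ?thesis using s by simp
next
  case False
  then obtain s where s: "r = 2*s+1" by (metis oddE)
  with assms have s1: "s \<ge> 1" by simp
  have "(\<Sum>q\<in>{1..2*r}. fa r q) = (\<Sum>q\<in>{1..(3*s+1)+(s-1)+2}. fa r q)" using s s1 by (simp add: algebra_simps)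
  also have "\<dots> = (\<Sum>q\<in>{1..(3*s+1)+(s-1)}. fa r q) + (\<Sum>q\<in>{(3*s+1)+(s-1)+1..(3*s+1)+(s-1)+2}. fa r q)"
    by (rule sum.ub_add_nat) simp
  also have "(\<Sum>q\<in>{1..(3*s+1)+(s-1)}. fa r q) = (\<Sum>q\<in>{1..3*s+1}. fa r q) + (\<Sum>q\<in>{3*s+1+1..(3*s+1)+(s-1)}. fa r q)"
    by (rule sum.ub_add_nat) simp
  also have "(\<Sum>q\<in>{1..3*s+1}. fa r q) = (\<Sum>q\<in>{1..3*s+1}. 2)"
    by (rule sum.cong) (auto simp: fa_def s)
  also have "(\<Sum>q\<in>{3*s+1+1..(3*s+1)+(s-1)}. fa r q) = (\<Sum>q\<in>{3*s+1+1..(3*s+1)+(s-1)}. -2)"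
    by (rule sum.cong) (auto simp: fa_def s)
  also have "(\<Sum>q\<in>{(3*s+1)+(s-1)+1..(3*s+1)+(s-1)+2}. fa r q) = (\<Sum>q\<in>{(3*s+1)+(s-1)+1..(3*s+1)+(s-1)+2}. -1)"
    by (rule sum.cong) (use s1 in \<open>auto simp: fa_def s\<close>)
  finally show ?thesis using s s1 by simp
qed


theorem lemma5:
  fixes m i :: nat
  assumes "m > 0" and "rho m \<ge> 2" and "i < rho m"
  shows "xs m i (kk m) = 1"
proof -
  define p where "p = pr m i"
  define k where "k = kk m"
  define r where "r = rho m"
  define u where "u = mu m i"
  have pin: "prime p" "2*m < p" "p < 3*m" using pr_in[OF assms(3)] by (auto simp: prime_set_def p_def)
  have ppos: "p > 0" using pin by linarith
  have u: "u = k div p" by (simp add: u_def mu_def k_def p_def)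
  have b: "beta m i = k - p * u" by (simp add: beta_def k_def p_def u_def)
  have pu: "p * u \<le> k" using u by simp
  have kr: "k = (6*m-1)*r" by (simp add: k_def kk_def r_def)
  have ur: "2*r \<le> u"
  proof -
    have h: "2*p \<le> 6*m-1" using pin by linarith
    have "2*r*p \<le> k" unfolding kr using mult_le_mono2[OF h, of r] by (simp add: algebra_simps)
    then have "(2*r*p) div p \<le> k div p" by (rule div_le_mono)
    then show ?thesis using u ppos by simp
  qed
  define A where "A = (\<lambda>q. q*p) ` {1..u}"
  have Asub: "A \<subseteq> {1..k}"
  proof
    fix j assume "j \<in> A"
    then obtain q where q: "1 \<le> q" "q \<le> u" "j = q*p" unfolding A_def by auto
    have "p*q \<le> p*u" using q(2) by (rule mult_le_mono2)
    then have "j \<le> k" using q(3) pu by (simp only: mult.commute[of q p])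
    moreover have "1 \<le> j" using q ppos by simp
    ultimately show "j \<in> {1..k}" by simp
  qed
  have ind: "(\<exists>l<u. k - j = beta m i + l * p) \<longleftrightarrow> j \<in> A" if j: "j \<in> {1..k}" for j
  proof
    assume "\<exists>l<u. k - j = beta m i + l * p"
    then obtain l where l: "l < u" "k - j = k - p*u + l*p" using b by auto
    have lp: "l*p \<le> p*u" using mult_le_mono1[of l u p] l(1) by (simp add: mult.commute)
    have e: "(u-l)*p = p*u - l*p" by (metis diff_mult_distrib mult.commute)
    have jk: "j \<le> k" using j by simp
    have "j = p*u - l*p" using l(2) lp jk pu by arith
    then have "j = (u - l) * p" using e by simp
    then show "j \<in> A" unfolding A_def using l by auto
  next
    assume "j \<in> A"
    then obtain q where q: "1 \<le> q" "q \<le> u" "j = q*p" unfolding A_def by auto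
    have lp: "q*p \<le> p*u" using mult_le_mono1[of q u p] q(2) by (simp add: mult.commute)
    have e: "(u-q)*p = p*u - q*p" by (metis diff_mult_distrib mult.commute)
    have "k - j = beta m i + (u - q) * p" unfolding e b using q(3) pu lp by arith
    then show "\<exists>l<u. k - j = beta m i + l * p" using q by (intro exI[of _ "u-q"]) auto
  qed
  have S: "(\<Sum>j\<in>{1..k}. abar m j * xs m i (k - j)) = (\<Sum>j\<in>A. abar m j)"
  proof -
    have "(\<Sum>j\<in>{1..k}. abar m j * xs m i (k - j)) = (\<Sum>j\<in>{1..k}. if j \<in> A then abar m j else 0)"
    proof (rule sum.cong)
      fix j assume j: "j \<in> {1..k}"
      have "xs m i (k - j) = (if \<exists>l<mu m i. k - j = beta m i + l * pr m i then 1 else 0)"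
        using j by (subst xs.simps) (auto simp: k_def)
      then show "abar m j * xs m i (k - j) = (if j \<in> A then abar m j else 0)"
        using ind[OF j] by (simp add: u_def p_def)
    qed simp
    also have "\<dots> = (\<Sum>j\<in>A. abar m j)"
      using Asub by (simp add: sum.If_cases Int_absorb1)
    finally show ?thesis .
  qed
  have "(\<Sum>j\<in>A. abar m j) = (\<Sum>q\<in>{1..u}. abar m (q*p))"
    unfolding A_def using ppos by (subst sum.reindex) (auto simp: inj_on_def)
  also have "\<dots> = (\<Sum>q\<in>{1..u}. fa r q)"
    using abar_mult[OF assms(3)] by (intro sum.cong) (auto simp: p_def r_def)
  also have "\<dots> = (\<Sum>q\<in>{1..2*r}. fa r q) + (\<Sum>q\<in>{2*r+1..2*r+(u-2*r)}. fa r q)"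
    using ur by (subst sum.ub_add_nat[symmetric]) auto
  also have "(\<Sum>q\<in>{2*r+1..2*r+(u-2*r)}. fa r q) = 0"
    by (intro sum.neutral) (auto simp: fa_zero)
  also have "(\<Sum>q\<in>{1..2*r}. fa r q) = 2 * int r"
    using fa_sum assms(2) r_def by simp
  finally have "(\<Sum>j\<in>{1..k}. abar m j * xs m i (k - j)) = theta m"
    using S by (simp add: theta_def r_def)
  then show ?thesis
    by (subst xs.simps) (simp add: k_def[symmetric] step_def)
qed

end
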